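(* Let $q\ge3$ be prime and let $T\subseteq\mathbb{F}_q$ have size $\ell\le q-1$. If $2\le\ell\le 2q/3$, then $T$ is $\delta$-mixing for some $\delta\ge\log_q(16/13)$. Otherwise, $T$ is $\delta$-mixing for some $\delta\ge\log_q\left(\frac{\ell^2}{q^2-3\ell(q-\ell)}\right)$.
   Context: For a prime power $q$ and $\delta\ge 0$ (or any real $\delta$), a set $T\subseteq\mathbb{F}_q$ is $\delta$-mixing if for all $\alpha,\beta,\gamma\in\mathbb{F}_q$ with $\alpha,\beta\neq0$, $\Pr[\alpha X+\beta X'\in T+\gamma]\le q^{-\delta}$, where $X,X'$ are independent and uniform on $T$ and $T+\gamma=\{t+\gamma:t\in T\}$. *)

theory Defs
  imports Complex_Main "HOL-Library.Cardinality" "HOL-Computational_Algebra.Primes"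
begin

text \<open>The finite field F_q is modelled by a finite field type 'a with CARD('a) = q.
  delta-mixing: for all alpha, beta nonzero and all gamma, the probability that
  alpha X + beta X' lies in T + gamma (X, X' independent uniform on T) is at most q powr (-delta).\<close>

definition mixing :: "'a::{field,finite} set \<Rightarrow> real \<Rightarrow> bool" where
  "mixing T \<delta> \<longleftrightarrow>
     (\<forall>\<alpha> \<beta> \<gamma> :: 'a. \<alpha> \<noteq> 0 \<longrightarrow> \<beta> \<noteq> 0 \<longrightarrow>
        real (card {(x, x'). x \<in> T \<and> x' \<in> T \<and> \<alpha> * x + \<beta> * x' \<in> (\<lambda>t. t + \<gamma>) ` T})
          / (real (card T))^2
        \<le> real (card (UNIV :: 'a set)) powr (- \<delta>))"

end

theory Submission
  imports Defs "HOL-Number_Theory.Residues"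
begin


lemma char_eq_card:
  assumes "prime CARD('a::{field,finite})"
  shows "CHAR('a) = CARD('a)"
proof -
  have "CHAR('a) dvd CARD('a)" by (rule CHAR_dvd_CARD)
  moreover have "CHAR('a) \<noteq> 1" using CHAR_not_1' by simp
  ultimately show ?thesis using assms by (metis prime_nat_iff)
qed

lemma of_nat_nz:
  assumes "prime CARD('a::{field,finite})" "0 < m" "m < CARD('a)"
  shows "(of_nat m :: 'a) \<noteq> 0"
  using assms char_eq_card[OF assms(1)] of_nat_eq_0_iff_char_dvd[where 'a='a]
  by (metis dvd_imp_le not_le)

lemma shift_closed_univ:
  fixes A :: "'a::{field,finite} set"
  assumes p: "prime CARD('a)" and ne: "a0 \<in> A" and d: "d \<noteq> 0"
    and cl: "\<And>a. a \<in> A \<Longrightarrow> a + d \<in> A"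
  shows "A = UNIV"
proof -
  have mem: "a0 + of_nat k * d \<in> A" for k
  proof (induction k)
    case 0 then show ?case using ne by simp
  next
    case (Suc k)
    have "a0 + of_nat (Suc k) * d = (a0 + of_nat k * d) + d" by (simp add: algebra_simps)
    then show ?case using cl[OF Suc] by (simp add: add.assoc)
  qed
  have inj: "inj_on (\<lambda>k. a0 + of_nat k * d) {..<CARD('a)}"
  proof (rule inj_onI)
    fix i j assume i: "i \<in> {..<CARD('a)}" and j: "j \<in> {..<CARD('a)}"
      and eq: "a0 + of_nat i * d = (a0 + of_nat j * (d::'a))"
    show "i = j"
    proof (rule ccontr)
      assume "i \<noteq> j"
      have eqn: "(of_nat i :: 'a) = of_nat j" using eq d by simp
      then consider "i < j" | "j < i" using \<open>i \<noteq> j\<close> by linarith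
      then show False
      proof cases
        case 1
        have "(of_nat (j - i) :: 'a) = 0" using eqn 1 by (simp add: of_nat_diff)
        then show False using of_nat_nz[OF p, of "j-i"] 1 j by (simp add: less_imp_diff_less)
      next
        case 2
        have "(of_nat (i - j) :: 'a) = 0" using eqn 2 by (simp add: of_nat_diff)
        then show False using of_nat_nz[OF p, of "i-j"] 2 i by (simp add: less_imp_diff_less)
      qed
    qed
  qed
  have "(\<lambda>k. a0 + of_nat k * d) ` {..<CARD('a)} \<subseteq> A" using mem by auto
  then have "CARD('a) \<le> card A" using card_inj_on_le[OF inj] by simp
  then show ?thesis by (metis card_seteq finite top_greatest)
qed

definition rcP :: "('a::{field,finite} \<times> 'a) set \<Rightarrow> 'a \<Rightarrow> nat" where
  "rcP P z = card {p \<in> P. fst p + snd p = z}"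

lemma rcP_sum: "(\<Sum>z\<in>UNIV. rcP P z) = card (P :: ('a::{field,finite} \<times> 'a) set)"
proof -
  have "P = (\<Union>z\<in>UNIV. {p \<in> P. fst p + snd p = z})" by auto
  then have "card P = card (\<Union>z\<in>UNIV. {p \<in> P. fst p + snd p = z})" by simp
  also have "\<dots> = (\<Sum>z\<in>UNIV. card {p \<in> P. fst p + snd p = z})"
    by (rule card_UN_disjoint) auto
  finally show ?thesis by (simp add: rcP_def)
qed

lemma rcP_Un: "P \<inter> Q = {} \<Longrightarrow> rcP (P \<union> Q) z = rcP P z + rcP Q z"
  unfolding rcP_def
  by (subst card_Un_disjoint[symmetric]) (auto intro: arg_cong[where f=card])

lemma rcP_mono: "P \<subseteq> Q \<Longrightarrow> rcP P z \<le> rcP Q z"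
  unfolding rcP_def by (rule card_mono) auto

lemma rcP_le_card: "rcP (A \<times> B) z \<le> card B"
proof -
  have "inj_on snd {p \<in> A \<times> B. fst p + snd p = z}"
  proof (rule inj_onI)
    fix x y assume "x \<in> {p \<in> A \<times> B. fst p + snd p = z}" "y \<in> {p \<in> A \<times> B. fst p + snd p = z}"
      "snd x = snd y"
    then have "fst x = fst y" by (metis (mono_tags, lifting) add_right_cancel mem_Collect_eq)
    then show "x = y" using \<open>snd x = snd y\<close> by (simp add: prod_eq_iff)
  qed
  then have "card {p \<in> A \<times> B. fst p + snd p = z} \<le> card B"
    by (rule card_inj_on_le) auto
  then show ?thesis by (simp add: rcP_def)
qed

lemma etrans_le:
  fixes A B :: "'a::{field,finite} set" and e :: 'a
  defines "B' \<equiv> {b \<in> B. b + e \<in> A}"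
  shows "rcP ((A \<union> (\<lambda>b. b + e) ` B) \<times> B') z \<le> rcP (A \<times> B) z"
proof -
  define f where "f = (\<lambda>(x::'a, y::'a). if x \<in> A then (x, y) else (y + e, x - e))"
  let ?S = "{p \<in> (A \<union> (\<lambda>b. b + e) ` B) \<times> B'. fst p + snd p = z}"
  let ?T = "{p \<in> A \<times> B. fst p + snd p = z}"
  have inj: "inj_on f ?S"
  proof (rule inj_onI)
    fix p q assume p: "p \<in> ?S" and q: "q \<in> ?S" and eq: "f p = f q"
    obtain x y where pxy: "p = (x, y)" by fastforce
    obtain x2 y2 where qxy: "q = (x2, y2)" by fastforce
    show "p = q"
    proof (cases "x \<in> A"; cases "x2 \<in> A")
      assume "x \<in> A" "x2 \<in> A" then show ?thesis using eq pxy qxy by (simp add: f_def)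
    next
      assume "x \<notin> A" "x2 \<notin> A" then show ?thesis using eq pxy qxy by (simp add: f_def)
    next
      assume a: "x \<in> A" "x2 \<notin> A"
      then have "y = x2 - e" using eq pxy qxy by (simp add: f_def)
      moreover have "y + e \<in> A" using p pxy by (simp add: B'_def)
      ultimately show ?thesis using a by simp
    next
      assume a: "x \<notin> A" "x2 \<in> A"
      then have "y2 = x - e" using eq pxy qxy by (simp add: f_def)
      moreover have "y2 + e \<in> A" using q qxy by (simp add: B'_def)
      ultimately show ?thesis using a by simp
    qed
  qed
  have "f ` ?S \<subseteq> ?T"
  proof
    fix r assume "r \<in> f ` ?S"
    then obtain pp where pp: "pp \<in> ?S" and r0: "r = f pp" by blast
    obtain x y where "pp = (x, y)" by fastforce
    then have xy: "(x, y) \<in> ?S" and r: "r = f (x, y)" using pp r0 by auto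
    show "r \<in> ?T"
    proof (cases "x \<in> A")
      case True then show ?thesis using xy r by (auto simp: f_def B'_def)
    next
      case False
      then obtain b where b: "b \<in> B" "x = b + e" using xy by auto
      then show ?thesis using xy r False by (auto simp: f_def B'_def algebra_simps)
    qed
  qed
  then have "card ?S \<le> card ?T" using card_inj_on_le[OF inj] by simp
  then show ?thesis by (simp add: rcP_def)
qed

lemma etrans_c1:
  fixes A B :: "'a::{field,finite} set" and e :: 'a
  defines "B' \<equiv> {b \<in> B. b + e \<in> A}"
  shows "rcP (A \<times> B - (A - (\<lambda>b. b + e) ` B') \<times> (B - B')) z \<le> card B'"
proof -
  define g where "g = (\<lambda>(x::'a, y::'a). if y \<in> B' then y else x - e)"
  let ?S = "{p \<in> A \<times> B - (A - (\<lambda>b. b + e) ` B') \<times> (B - B'). fst p + snd p = z}"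
  have inj: "inj_on g ?S"
  proof (rule inj_onI)
    fix p q assume p: "p \<in> ?S" and q: "q \<in> ?S" and eq: "g p = g q"
    obtain x y where pxy: "p = (x, y)" by fastforce
    obtain x2 y2 where qxy: "q = (x2, y2)" by fastforce
    have s1: "x + y = z" "x2 + y2 = z" using p q pxy qxy by auto
    show "p = q"
    proof (cases "y \<in> B'"; cases "y2 \<in> B'")
      assume "y \<in> B'" "y2 \<in> B'" then have "y = y2" using eq pxy qxy by (simp add: g_def)
      then show ?thesis using s1 pxy qxy by (metis add_right_cancel)
    next
      assume "y \<notin> B'" "y2 \<notin> B'"
      then have "x = x2" using eq pxy qxy by (simp add: g_def)
      then show ?thesis using s1 pxy qxy by (metis add_left_cancel)
    next
      assume a: "y \<in> B'" "y2 \<notin> B'"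
      then have "y = x2 - e" using eq pxy qxy by (simp add: g_def)
      then have "y2 + e = x" using s1 by (simp add: algebra_simps) (metis add.commute add_diff_cancel_left' diff_add_eq diff_diff_eq2)
      moreover have "y2 \<in> B" "x \<in> A" using p q pxy qxy by auto
      ultimately have "y2 \<in> B'" by (simp add: B'_def)
      then show ?thesis using a by simp
    next
      assume a: "y \<notin> B'" "y2 \<in> B'"
      then have "y2 = x - e" using eq pxy qxy by (simp add: g_def)
      then have "y + e = x2" using s1 by (simp add: algebra_simps) (metis add.commute add_diff_cancel_left' diff_add_eq diff_diff_eq2)
      moreover have "y \<in> B" "x2 \<in> A" using p q pxy qxy by auto
      ultimately have "y \<in> B'" by (simp add: B'_def)
      then show ?thesis using a by simp
    qed
  qed
  have "g ` ?S \<subseteq> B'"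
  proof
    fix r assume "r \<in> g ` ?S"
    then obtain pp where pp: "pp \<in> ?S" and r0: "r = g pp" by blast
    obtain x y where "pp = (x, y)" by fastforce
    then have xy: "(x, y) \<in> ?S" and r: "r = g (x, y)" using pp r0 by auto
    show "r \<in> B'"
    proof (cases "y \<in> B'")
      case True then show ?thesis using r by (simp add: g_def)
    next
      case False
      then have "x \<in> (\<lambda>b. b + e) ` B'" using xy by (auto simp: B'_def)
      then show ?thesis using r False by (auto simp: g_def)
    qed
  qed
  then have "card ?S \<le> card B'" using card_inj_on_le[OF inj] by simp
  then show ?thesis by (simp add: rcP_def)
qed

lemma pollard:
  fixes A B :: "'a::{field,finite} set"
  assumes p: "prime CARD('a)"
  shows "t \<le> card A \<Longrightarrow> t \<le> card B \<Longrightarrow> card A + card B \<le> CARD('a) + t \<Longrightarrow>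
    t * (card A + card B - t) \<le> (\<Sum>z\<in>UNIV. min (rcP (A \<times> B) z) t)"
proof (induction "card B" arbitrary: A B t rule: less_induct)
  case less
  note tA = less.prems(1) and tB = less.prems(2) and sz = less.prems(3)
  show ?case
  proof (cases "card B \<le> t")
    case True
    then have cB: "card B = t" using tB by simp
    have "(\<Sum>z\<in>UNIV. min (rcP (A \<times> B) z) t) = (\<Sum>z\<in>UNIV. rcP (A \<times> B) z)"
      using rcP_le_card[of A B] cB by (intro sum.cong) (auto simp: min_def)
    also have "\<dots> = card A * card B" by (simp add: rcP_sum card_cartesian_product)
    finally show ?thesis using cB by simp
  next
    case False
    then have Bt: "t < card B" by simp
    show ?thesis
    proof (cases "t = 0")
      case True then show ?thesis by simp
    next
      case False
      then have tpos: "1 \<le> t" by simp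
      then have "A \<noteq> {}" using tA by auto
      then obtain a0 where a0: "a0 \<in> A" by blast
      have "B \<noteq> {}" using Bt by auto
      then obtain b2 where b2: "b2 \<in> B" by blast
      have "card (B - {b2}) \<ge> 1" using Bt tpos b2 by simp
      then have "B - {b2} \<noteq> {}" by (metis card.empty not_one_le_zero)
      then obtain b1 where b1: "b1 \<in> B" "b1 \<noteq> b2" by blast
      have "\<exists>e. 1 \<le> card {b \<in> B. b + e \<in> A} \<and> card {b \<in> B. b + e \<in> A} < card B"
      proof (rule ccontr)
        assume nex: "\<not> ?thesis"
        have "a + (b1 - b2) \<in> A" if a: "a \<in> A" for a
        proof -
          have "b2 \<in> {b \<in> B. b + (a - b2) \<in> A}" using a b2 by simp
          then have "1 \<le> card {b \<in> B. b + (a - b2) \<in> A}"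
            by (metis One_nat_def Suc_leI card_gt_0_iff empty_iff finite)
          then have "\<not> card {b \<in> B. b + (a - b2) \<in> A} < card B" using nex by blast
          then have "{b \<in> B. b + (a - b2) \<in> A} = B"
            by (intro card_seteq) auto
          then have "b1 + (a - b2) \<in> A" using b1 by blast
          then show ?thesis by (simp add: algebra_simps)
        qed
        then have "A = UNIV" using shift_closed_univ[OF p a0, of "b1 - b2"] b1 by auto
        then have "card A = CARD('a)" by simp
        then show False using sz Bt by simp
      qed
      then obtain e where s1: "1 \<le> card {b \<in> B. b + e \<in> A}"
        and s2: "card {b \<in> B. b + e \<in> A} < card B" by blast
      define B' where "B' = {b \<in> B. b + e \<in> A}"
      define s where "s = card B'"
      define E where "E = (\<lambda>b. b + e) ` B'"
      have EA: "E \<subseteq> A" by (auto simp: E_def B'_def)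
      have cE: "card E = s" unfolding E_def s_def by (rule card_image) (simp add: inj_on_def)
      have B'B: "B' \<subseteq> B" by (auto simp: B'_def)
      have s1': "1 \<le> s" and s2': "s < card B" using s1 s2 by (simp_all add: s_def B'_def)
      show ?thesis
      proof (cases "t \<le> s")
        case True
        define A' where "A' = A \<union> (\<lambda>b. b + e) ` B"
        have int: "A \<inter> (\<lambda>b. b + e) ` B = E" by (auto simp: E_def B'_def)
        have cimg: "card ((\<lambda>b. b + e) ` B) = card B" by (rule card_image) (simp add: inj_on_def)
        have cA': "card A' + s = card A + card B"
          using card_Un_Int[of A "(\<lambda>b. b + e) ` B"] int cimg cE by (simp add: A'_def)
        have "card A \<le> card A'" by (rule card_mono) (auto simp: A'_def)
        have IH: "t * (card A' + card B' - t) \<le> (\<Sum>z\<in>UNIV. min (rcP (A' \<times> B') z) t)"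
          using less.hyps[of B' t A'] s2' True tA sz cA' \<open>card A \<le> card A'\<close>
          by (simp add: s_def)
        have "(\<Sum>z\<in>UNIV. min (rcP (A' \<times> B') z) t) \<le> (\<Sum>z\<in>UNIV. min (rcP (A \<times> B) z) t)"
          using etrans_le[of A e B] by (intro sum_mono) (simp add: A'_def B'_def min.coboundedI1)
        then show ?thesis using IH cA' by (simp add: s_def)
      next
        case False
        then have st: "s < t" by simp
        define A1 where "A1 = A - E"
        define B1 where "B1 = B - B'"
        define P1 where "P1 = A \<times> B - A1 \<times> B1"
        have cA1: "card A1 + s = card A" using EA cE card_Diff_subset[of E A]
          by (simp add: A1_def) (metis card_mono finite le_add_diff_inverse2)
        have cB1: "card B1 + s = card B" using B'B card_Diff_subset[of B' B]
          by (simp add: B1_def s_def) (metis card_mono finite le_add_diff_inverse2)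
        have sub: "A1 \<times> B1 \<subseteq> A \<times> B" by (auto simp: A1_def B1_def)
        have cP1: "card P1 + card A1 * card B1 = card A * card B"
          using card_Diff_subset[OF _ sub] card_mono[OF _ sub]
          by (simp add: P1_def card_cartesian_product)
        have c1: "rcP P1 z \<le> s" for z
          using etrans_c1[of A B e z] by (simp add: P1_def A1_def B1_def E_def B'_def s_def)
        have IH: "(t - s) * (card A1 + card B1 - (t - s)) \<le> (\<Sum>z\<in>UNIV. min (rcP (A1 \<times> B1) z) (t - s))"
          using less.hyps[of B1 "t - s" A1] cA1 cB1 s1' tA tB sz st by simp
        have pw: "rcP P1 z + min (rcP (A1 \<times> B1) z) (t - s) \<le> min (rcP (A \<times> B) z) t" for z
        proof -
          have "A \<times> B = P1 \<union> A1 \<times> B1" "P1 \<inter> A1 \<times> B1 = {}" using sub by (auto simp: P1_def)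
          then have "rcP (A \<times> B) z = rcP P1 z + rcP (A1 \<times> B1) z" using rcP_Un by metis
          then show ?thesis using c1[of z] st by simp
        qed
        have "card P1 + (\<Sum>z\<in>UNIV. min (rcP (A1 \<times> B1) z) (t - s)) \<le> (\<Sum>z\<in>UNIV. min (rcP (A \<times> B) z) t)"
          using sum_mono[of UNIV "\<lambda>z. rcP P1 z + min (rcP (A1 \<times> B1) z) (t - s)", OF pw]
          by (simp add: sum.distrib rcP_sum)
        moreover have "t * (card A + card B - t) \<le> card P1 + (t - s) * (card A1 + card B1 - (t - s))"
        proof -
          obtain u where u: "t = s + u" using st by (metis less_imp_add_positive)
          obtain x where x: "card A1 = u + x" using cA1 tA u by (metis add_le_imp_le_right le_iff_add add.commute)
          obtain y where y: "card B1 = u + y" using cB1 tB u by (metis add_le_imp_le_right le_iff_add add.commute)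
          have "card P1 + (u + x) * (u + y) = (u + x + s) * (u + y + s)" using cP1 x y cA1 cB1
            by (metis add.commute)
          then have P1: "card P1 = (u + x) * s + (u + y) * s + s * s" by (simp add: algebra_simps)
          show ?thesis using P1 u x y cA1[symmetric] cB1[symmetric] by (simp add: algebra_simps)
        qed
        ultimately show ?thesis using IH by linarith
      qed
    qed
  qed
qed



lemma count_eq:
  fixes T S :: "'a::{field,finite} set" and \<alpha> \<beta> :: 'a
  assumes "\<alpha> \<noteq> 0" "\<beta> \<noteq> 0"
  shows "card {(x, x'). x \<in> T \<and> x' \<in> T \<and> \<alpha> * x + \<beta> * x' \<in> S}
         = (\<Sum>z\<in>S. rcP (((*) \<alpha>) ` T \<times> ((*) \<beta>) ` T) z)"
proof -
  let ?P = "((*) \<alpha>) ` T \<times> ((*) \<beta>) ` T"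
  define h where "h = (\<lambda>(x::'a, x'::'a). (\<alpha> * x, \<beta> * x'))"
  have "bij_betw h {(x, x'). x \<in> T \<and> x' \<in> T \<and> \<alpha> * x + \<beta> * x' \<in> S} {p \<in> ?P. fst p + snd p \<in> S}"
  proof (rule bij_betw_imageI)
    show "inj_on h {(x, x'). x \<in> T \<and> x' \<in> T \<and> \<alpha> * x + \<beta> * x' \<in> S}"
      using assms by (auto simp: inj_on_def h_def)
    show "h ` {(x, x'). x \<in> T \<and> x' \<in> T \<and> \<alpha> * x + \<beta> * x' \<in> S} = {p \<in> ?P. fst p + snd p \<in> S}"
      by (auto simp: h_def image_iff)
  qed
  then have "card {(x, x'). x \<in> T \<and> x' \<in> T \<and> \<alpha> * x + \<beta> * x' \<in> S} = card {p \<in> ?P. fst p + snd p \<in> S}"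
    by (rule bij_betw_same_card)
  also have "{p \<in> ?P. fst p + snd p \<in> S} = (\<Union>z\<in>S. {p \<in> ?P. fst p + snd p = z})" by auto
  also have "card \<dots> = (\<Sum>z\<in>S. card {p \<in> ?P. fst p + snd p = z})"
    by (rule card_UN_disjoint) auto
  finally show ?thesis by (simp add: rcP_def)
qed

lemma split_S:
  fixes S :: "'a::{field,finite} set"
  shows "(\<Sum>z\<in>UNIV. f z) = (\<Sum>z\<in>S. f z) + (\<Sum>z\<in>-S. (f z :: nat))"
proof -
  have "(\<Sum>z\<in>S \<union> -S. f z) = (\<Sum>z\<in>S. f z) + (\<Sum>z\<in>-S. f z)"
    by (rule sum.union_disjoint) auto
  then show ?thesis by simp
qed

lemma bound_pollard:
  fixes A B S :: "'a::{field,finite} set"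
  assumes p: "prime CARD('a)" and cA: "card A = l" and cB: "card B = l" and cS: "card S = l"
    and tl: "t \<le> l" and sz: "l + l \<le> CARD('a) + t"
  shows "(\<Sum>z\<in>S. rcP (A \<times> B) z) + t * (l - t) \<le> l * l"
proof -
  have P: "t * (l + l - t) \<le> (\<Sum>z\<in>UNIV. min (rcP (A \<times> B) z) t)"
    using pollard[OF p, of t A B] cA cB tl sz by simp
  have "(\<Sum>z\<in>UNIV. min (rcP (A \<times> B) z) t) = (\<Sum>z\<in>S. min (rcP (A \<times> B) z) t) + (\<Sum>z\<in>-S. min (rcP (A \<times> B) z) t)"
    by (rule split_S)
  also have "\<dots> \<le> (\<Sum>z\<in>S. t) + (\<Sum>z\<in>-S. rcP (A \<times> B) z)"
    by (intro add_mono sum_mono) auto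
  finally have Q0: "(\<Sum>z\<in>UNIV. min (rcP (A \<times> B) z) t) \<le> (\<Sum>z\<in>S. t) + (\<Sum>z\<in>-S. rcP (A \<times> B) z)" .
  have St: "(\<Sum>z\<in>S. t) = t * l" using cS by simp
  have Q: "t * (l + l - t) \<le> t * l + (\<Sum>z\<in>-S. rcP (A \<times> B) z)" using P Q0 St by linarith
  have R: "(\<Sum>z\<in>S. rcP (A \<times> B) z) + (\<Sum>z\<in>-S. rcP (A \<times> B) z) = l * l"
    using split_S[of "rcP (A \<times> B)" S] rcP_sum[of "A \<times> B"] cA cB by (simp add: card_cartesian_product)
  obtain x where x: "l = t + x" using tl le_iff_add by blast
  have e1: "t * (l + l - t) = t * l + t * x" by (simp add: x algebra_simps)
  have e2: "l * l = t * l + x * l" by (simp add: x algebra_simps)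
  have e3: "t * (l - t) = t * x" by (simp add: x)
  show ?thesis using Q R e1 e2 e3 by linarith
qed

lemma rc_lower:
  fixes A B :: "'a::{field,finite} set"
  shows "card A + card B \<le> CARD('a) + rcP (A \<times> B) z"
proof -
  let ?X = "(\<lambda>b. z - b) ` B"
  have cX: "card ?X = card B" by (rule card_image) (simp add: inj_on_def)
  have "card (A \<union> ?X) \<le> CARD('a)" by (rule card_mono) auto
  moreover have "card A + card ?X = card (A \<union> ?X) + card (A \<inter> ?X)" by (rule card_Un_Int) auto
  moreover have "card (A \<inter> ?X) \<le> rcP (A \<times> B) z"
  proof -
    have i: "inj_on (\<lambda>a. (a, z - a)) (A \<inter> ?X)" by (simp add: inj_on_def)
    have j: "(\<lambda>a. (a, z - a)) ` (A \<inter> ?X) \<subseteq> {p \<in> A \<times> B. fst p + snd p = z}" by auto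
    have "card (A \<inter> ?X) \<le> card {p \<in> A \<times> B. fst p + snd p = z}"
      using card_inj_on_le[OF i j] by simp
    then show ?thesis by (simp add: rcP_def)
  qed
  ultimately show ?thesis using cX by linarith
qed

lemma bound_pigeon:
  fixes A B S :: "'a::{field,finite} set"
  assumes cA: "card A = l" and cB: "card B = l" and cS: "card S = l"
  shows "int (\<Sum>z\<in>S. rcP (A \<times> B) z) \<le> int l * int l - (int CARD('a) - int l) * (2 * int l - int CARD('a))"
proof -
  have lo: "2 * int l - int CARD('a) \<le> int (rcP (A \<times> B) z)" for z
    using rc_lower[of A B z] cA cB by linarith
  have cSc: "card (- S) = CARD('a) - l"
    using cS by (simp add: Compl_eq_Diff_UNIV card_Diff_subset)
  have lS: "l \<le> CARD('a)" using cS by (metis card_mono finite top_greatest)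
  have "(\<Sum>z\<in>-S. 2 * int l - int CARD('a)) \<le> (\<Sum>z\<in>-S. int (rcP (A \<times> B) z))"
    by (rule sum_mono) (rule lo)
  then have L: "(int CARD('a) - int l) * (2 * int l - int CARD('a)) \<le> int (\<Sum>z\<in>-S. rcP (A \<times> B) z)"
    using cSc lS by (simp add: of_nat_diff)
  have R: "(\<Sum>z\<in>S. rcP (A \<times> B) z) + (\<Sum>z\<in>-S. rcP (A \<times> B) z) = l * l"
    using split_S[of "rcP (A \<times> B)" S] rcP_sum[of "A \<times> B"] cA cB by (simp add: card_cartesian_product)
  then have "int (\<Sum>z\<in>S. rcP (A \<times> B) z) + int (\<Sum>z\<in>-S. rcP (A \<times> B) z) = int l * int l"
    by (metis of_nat_add of_nat_mult)
  then show ?thesis using L by linarith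
qed



lemma three_cards:
  fixes T :: "'a::{field,finite} set"
  assumes "\<alpha> \<noteq> 0" "\<beta> \<noteq> 0" "card T = l"
  shows "card (((*) \<alpha>) ` T) = l" "card (((*) \<beta>) ` T) = l" "card ((\<lambda>t. t + \<gamma>) ` T) = l"
  using assms by (auto simp: card_image inj_on_def)

lemma case1_arith:
  fixes l t :: nat
  assumes "t = l div 2" "2 \<le> l"
  shows "3 * (l * l) \<le> 16 * (t * (l - t))"
proof (cases "even l")
  case True
  then have "l = 2 * t" using assms by simp
  then show ?thesis by (simp add: algebra_simps)
next
  case False
  then have l: "l = 2 * t + 1" using assms by presburger
  then have "1 \<le> t" using assms by simp
  then have "1 \<le> t * t" by simp
  have "l - t = t + 1" using l by simp
  then show ?thesis using l \<open>1 \<le> t * t\<close> by (simp add: algebra_simps)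
qed

theorem corollary3p3:
  fixes T :: "'a::{field,finite} set" and l :: nat
  assumes "prime CARD('a)" and "CARD('a) \<ge> 3"
    and "T \<noteq> {}" and "card T = l" and "l \<le> CARD('a) - 1"
  shows "(2 \<le> l \<and> real l \<le> 2 * real CARD('a) / 3 \<longrightarrow>
            (\<exists>\<delta>. \<delta> \<ge> log (real CARD('a)) (16 / 13) \<and> mixing T \<delta>))
       \<and> (\<not> (2 \<le> l \<and> real l \<le> 2 * real CARD('a) / 3) \<longrightarrow>
            (\<exists>\<delta>. \<delta> \<ge> log (real CARD('a))
                   ((real l)^2 / ((real CARD('a))^2 - 3 * real l * (real CARD('a) - real l)))
                 \<and> mixing T \<delta>))"
proof (intro conjI impI)
  note p = assms(1)
  have q1: "1 < real CARD('a)" using assms(2) by simp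
  have lpos: "1 \<le> l" using assms(3,4) by (metis One_nat_def Suc_leI card_gt_0_iff finite)
  let ?N = "\<lambda>\<alpha> \<beta> \<gamma>. card {(x, x'). x \<in> T \<and> x' \<in> T \<and> \<alpha> * x + \<beta> * x' \<in> (\<lambda>t. t + (\<gamma>::'a)) ` T}"
  {
    assume c1: "2 \<le> l \<and> real l \<le> 2 * real CARD('a) / 3"
    define t where "t = l div 2"
    have "3 * l \<le> 2 * CARD('a)" using c1 by linarith
    then have sz: "l + l \<le> CARD('a) + t" unfolding t_def by presburger
    have tl: "t \<le> l" unfolding t_def by simp
    have ar: "3 * (l * l) \<le> 16 * (t * (l - t))" using case1_arith[OF t_def] c1 by simp
    have "mixing T (log (real CARD('a)) (16 / 13))"
      unfolding mixing_def
    proof (intro allI impI)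
      fix \<alpha> \<beta> \<gamma> :: 'a assume a: "\<alpha> \<noteq> 0" "\<beta> \<noteq> 0"
      have "?N \<alpha> \<beta> \<gamma> + t * (l - t) \<le> l * l"
        using count_eq[OF a, of T "(\<lambda>t. t + \<gamma>) ` T"] bound_pollard[OF p three_cards(1)[OF a assms(4)] three_cards(2)[OF a assms(4)] three_cards(3)[OF a assms(4), of \<gamma>] tl sz]
        by simp
      then have "16 * ?N \<alpha> \<beta> \<gamma> \<le> 13 * (l * l)" using ar by linarith
      then have "16 * real (?N \<alpha> \<beta> \<gamma>) \<le> 13 * (real l)^2"
        by (metis (no_types, lifting) of_nat_le_iff of_nat_mult of_nat_numeral power2_eq_square)
      moreover have "0 < (real l)^2" using lpos by simp
      ultimately have "real (?N \<alpha> \<beta> \<gamma>) / (real (card T))^2 \<le> 13 / 16"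
        using assms(4) by (simp add: divide_simps)
      also have "13 / 16 = real (card (UNIV :: 'a set)) powr (- log (real CARD('a)) (16 / 13))"
        using q1 by (simp add: powr_minus powr_log_cancel)
      finally show "real (?N \<alpha> \<beta> \<gamma>) / (real (card T))^2 \<le> real (card (UNIV :: 'a set)) powr (- log (real CARD('a)) (16 / 13))" .
    qed
    then show "\<exists>\<delta>. \<delta> \<ge> log (real CARD('a)) (16 / 13) \<and> mixing T \<delta>" by blast
  }
  {
    define q where "q = real CARD('a)"
    define D where "D = q^2 - 3 * real l * (q - real l)"
    have Deq: "D = (q - 3 / 2 * real l)^2 + 3 / 4 * (real l)^2" unfolding D_def by (simp add: power2_eq_square algebra_simps)
    have Dpos: "0 < D" unfolding Deq using lpos by (intro add_nonneg_pos) auto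
    have lsq: "0 < (real l)^2" using lpos by simp
    have "mixing T (log q ((real l)^2 / D))"
      unfolding mixing_def
    proof (intro allI impI)
      fix \<alpha> \<beta> \<gamma> :: 'a assume a: "\<alpha> \<noteq> 0" "\<beta> \<noteq> 0"
      have "int (?N \<alpha> \<beta> \<gamma>) \<le> int l * int l - (int CARD('a) - int l) * (2 * int l - int CARD('a))"
        using count_eq[OF a, of T "(\<lambda>t. t + \<gamma>) ` T"] bound_pigeon[OF three_cards(1)[OF a assms(4)] three_cards(2)[OF a assms(4)] three_cards(3)[OF a assms(4), of \<gamma>]]
        by simp
      then have "real_of_int (int (?N \<alpha> \<beta> \<gamma>)) \<le> real_of_int (int l * int l - (int CARD('a) - int l) * (2 * int l - int CARD('a)))"
        by (simp only: of_int_le_iff)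
      then have "real (?N \<alpha> \<beta> \<gamma>) \<le> real l * real l - (q - real l) * (2 * real l - q)"
        by (simp add: q_def)
      also have "\<dots> = D" unfolding D_def by (simp add: power2_eq_square algebra_simps)
      finally have ND: "real (?N \<alpha> \<beta> \<gamma>) \<le> D" .
      have "real (?N \<alpha> \<beta> \<gamma>) / (real (card T))^2 \<le> D / (real l)^2"
        using ND lsq assms(4) by (simp add: divide_right_mono)
      also have "D / (real l)^2 = q powr (- log q ((real l)^2 / D))"
        using q1 Dpos lsq by (simp add: q_def powr_minus powr_log_cancel)
      finally show "real (?N \<alpha> \<beta> \<gamma>) / (real (card T))^2 \<le> real (card (UNIV :: 'a set)) powr (- log q ((real l)^2 / D))"
        by (simp add: q_def)
    qed
    then show "\<exists>\<delta>. \<delta> \<ge> log (real CARD('a))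
                   ((real l)^2 / ((real CARD('a))^2 - 3 * real l * (real CARD('a) - real l)))
                 \<and> mixing T \<delta>" by (auto simp: q_def D_def)
  }
qed

end
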